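(* Let $\rho$ be an $n$-qubit density matrix and define $\vec z\in\mathbb{C}^n$ by $z_i=\langle e_i|\rho|0^n\rangle$. If $\vec a\in\mathbb{C}^n$ satisfies $\|\vec a-\vec z\|_2\le\|\vec a\|_2/2$, then \[ \langle\pi_{\vec a/10}|\rho|\pi_{\vec a/10}\rangle\ge\langle0^n|\rho|0^n\rangle+\frac{\|\vec a\|_2^2}{20}. \]
   Context: For $\vec w\in\mathbb{C}^n$, $|\pi_{\vec w}\rangle=\bigotimes_{i=1}^n\frac{|0\rangle+w_i|1\rangle}{\sqrt{1+|w_i|^2}}$. $|e_i\rangle$ denotes the $n$-qubit computational basis state with $|1\rangle$ in position $i$ and $|0\rangle$ elsewhere. *)

theory Defs
  imports "HOL-Analysis.Analysis"
begin

text \<open>n-qubit operators are represented as functions nat => nat => complex,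
  meaningful on indices < 2^n.  A computational basis index x < 2^n encodes the
  bitstring whose i-th qubit (i < n) is bit i of x.  Vectors in C^n are functions
  nat => complex, meaningful on indices < n.\<close>

definition hermitian_op :: "nat \<Rightarrow> (nat \<Rightarrow> nat \<Rightarrow> complex) \<Rightarrow> bool" where
  "hermitian_op n \<rho> \<longleftrightarrow> (\<forall>i<2^n. \<forall>j<2^n. \<rho> i j = cnj (\<rho> j i))"

definition quad_form :: "nat \<Rightarrow> (nat \<Rightarrow> nat \<Rightarrow> complex) \<Rightarrow> (nat \<Rightarrow> complex) \<Rightarrow> complex" where
  "quad_form n \<rho> v = (\<Sum>i<2^n. \<Sum>j<2^n. cnj (v i) * \<rho> i j * v j)"

definition density_matrix :: "nat \<Rightarrow> (nat \<Rightarrow> nat \<Rightarrow> complex) \<Rightarrow> bool" where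
  "density_matrix n \<rho> \<longleftrightarrow> hermitian_op n \<rho>
     \<and> (\<forall>v. Im (quad_form n \<rho> v) = 0 \<and> Re (quad_form n \<rho> v) \<ge> 0)
     \<and> (\<Sum>i<2^n. \<rho> i i) = 1"

text \<open>basis index of e_i: qubit i is 1, all others 0\<close>
definition e_idx :: "nat \<Rightarrow> nat" where
  "e_idx i = 2 ^ i"

definition pi_state :: "nat \<Rightarrow> (nat \<Rightarrow> complex) \<Rightarrow> nat \<Rightarrow> complex" where
  "pi_state n w x = (\<Prod>i<n. (if bit x i then w i else 1) / complex_of_real (sqrt (1 + (cmod (w i))\<^sup>2)))"

definition vnorm :: "nat \<Rightarrow> (nat \<Rightarrow> complex) \<Rightarrow> real" where
  "vnorm n v = sqrt (\<Sum>i<n. (cmod (v i))\<^sup>2)"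

end

theory Submission
  imports Defs
begin

lemma sum_even_odd: "(\<Sum>x<2*m. g x) = (\<Sum>y<m. g (2*y) + g (2*y+1))" for g :: "nat \<Rightarrow> 'a::comm_monoid_add"
  by (induction m) (auto simp: add.assoc)

lemma sum_bits_prod:
  fixes f :: "nat \<Rightarrow> bool \<Rightarrow> 'a::comm_semiring_1"
  shows "(\<Sum>x::nat<2^n. \<Prod>i<n. f i (bit x i)) = (\<Prod>i<n. f i False + f i True)"
proof (induction n arbitrary: f)
  case 0 then show ?case by simp
next
  case (Suc n)
  have "(\<Sum>x::nat<2^Suc n. \<Prod>i<Suc n. f i (bit x i))
      = (\<Sum>x::nat<2*2^n. f 0 (odd x) * (\<Prod>i<n. f (Suc i) (bit (x div 2) i)))"
    by (simp only: prod.lessThan_Suc_shift bit_0 bit_Suc power_Suc)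
  also have "\<dots> = (\<Sum>y::nat<2^n. (f 0 False + f 0 True) * (\<Prod>i<n. f (Suc i) (bit y i)))"
    by (subst sum_even_odd) (simp add: algebra_simps)
  also have "\<dots> = (f 0 False + f 0 True) * (\<Prod>i<n. f (Suc i) False + f (Suc i) True)"
    using Suc.IH[of "\<lambda>i. f (Suc i)"] by (simp add: sum_distrib_left[symmetric])
  also have "\<dots> = (\<Prod>i<Suc n. f i False + f i True)"
    by (simp only: prod.lessThan_Suc_shift)
  finally show ?case .
qed

definition Bf :: "nat \<Rightarrow> (nat \<Rightarrow> nat \<Rightarrow> complex) \<Rightarrow> (nat \<Rightarrow> complex) \<Rightarrow> (nat \<Rightarrow> complex) \<Rightarrow> complex" where
  "Bf n \<rho> x y = (\<Sum>i<2^n. \<Sum>j<2^n. cnj (x i) * \<rho> i j * y j)"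

lemma quad_Bf: "quad_form n \<rho> v = Bf n \<rho> v v"
  by (simp add: quad_form_def Bf_def)

lemma Bf_add_left: "Bf n \<rho> (\<lambda>k. x k + y k) z = Bf n \<rho> x z + Bf n \<rho> y z"
  by (simp add: Bf_def algebra_simps sum.distrib)

lemma Bf_add_right: "Bf n \<rho> z (\<lambda>k. x k + y k) = Bf n \<rho> z x + Bf n \<rho> z y"
  by (simp add: Bf_def algebra_simps sum.distrib)

lemma Bf_scale: "Bf n \<rho> (\<lambda>k. c * x k) (\<lambda>k. d * y k) = cnj c * d * Bf n \<rho> x y"
  by (simp add: Bf_def sum_distrib_left algebra_simps)

lemma Bf_herm: assumes "hermitian_op n \<rho>" shows "Bf n \<rho> y x = cnj (Bf n \<rho> x y)"
proof -
  have "cnj (Bf n \<rho> x y) = (\<Sum>i<2^n. \<Sum>j<2^n. cnj (y j) * \<rho> j i * x i)"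
  proof -
    have "cnj (Bf n \<rho> x y) = (\<Sum>i<2^n. \<Sum>j<2^n. x i * cnj (\<rho> i j) * cnj (y j))"
      by (simp add: Bf_def)
    also have "\<dots> = (\<Sum>i<2^n. \<Sum>j<2^n. cnj (y j) * \<rho> j i * x i)"
    proof (intro sum.cong refl)
      fix i j assume "i \<in> {..<(2::nat)^n}" "j \<in> {..<(2::nat)^n}"
      then have "\<rho> j i = cnj (\<rho> i j)" using assms unfolding hermitian_op_def by blast
      then show "x i * cnj (\<rho> i j) * cnj (y j) = cnj (y j) * \<rho> j i * x i" by simp
    qed
    finally show ?thesis .
  qed
  also have "\<dots> = Bf n \<rho> y x" unfolding Bf_def by (rule sum.swap)
  finally show ?thesis by simp
qed

lemma Re_quad_add: assumes "hermitian_op n \<rho>"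
  shows "Re (quad_form n \<rho> (\<lambda>k. x k + y k)) = Re (quad_form n \<rho> x) + Re (quad_form n \<rho> y) + 2 * Re (Bf n \<rho> x y)"
proof -
  have "quad_form n \<rho> (\<lambda>k. x k + y k) = Bf n \<rho> x x + Bf n \<rho> x y + (Bf n \<rho> y x + Bf n \<rho> y y)"
    unfolding quad_Bf Bf_add_left Bf_add_right by (rule refl)
  moreover have "Re (Bf n \<rho> y x) = Re (Bf n \<rho> x y)" using Bf_herm[OF assms, of x y] by simp
  ultimately show ?thesis unfolding quad_Bf by simp
qed

lemma real_quad_lemma:
  fixes A C m :: real
  assumes "\<And>t. 0 \<le> A + t^2 * m * C - 2 * t * m" "m \<ge> 0" "A \<ge> 0" "C \<ge> 0"
  shows "m \<le> A * C"
proof (cases "m = 0")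
  case True then show ?thesis using assms by simp
next
  case False
  then have m: "m > 0" using assms by simp
  show ?thesis
  proof (cases "C = 0")
    case True
    have "0 \<le> A + ((A+1)/(2*m))^2 * m * C - 2 * ((A+1)/(2*m)) * m" by (rule assms(1))
    then show ?thesis using True m by (simp add: field_simps)
  next
    case False
    then have C: "C > 0" using assms by simp
    have "0 \<le> A + (1/C)^2 * m * C - 2 * (1/C) * m" by (rule assms(1))
    then have "0 \<le> A - m / C" using C by (simp add: field_simps power2_eq_square)
    then show ?thesis using C by (simp add: field_simps)
  qed
qed

lemma dm_psd: "density_matrix n \<rho> \<Longrightarrow> Re (quad_form n \<rho> v) \<ge> 0"
  by (simp add: density_matrix_def)

lemma dm_herm: "density_matrix n \<rho> \<Longrightarrow> hermitian_op n \<rho>"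
  by (simp add: density_matrix_def)

lemma Bf_CS:
  assumes dm: "density_matrix n \<rho>"
  shows "(cmod (Bf n \<rho> x y))^2 \<le> Re (quad_form n \<rho> x) * Re (quad_form n \<rho> y)"
proof -
  define b where "b = Bf n \<rho> x y"
  have "0 \<le> Re (quad_form n \<rho> x) + t^2 * (cmod b)^2 * Re (quad_form n \<rho> y) - 2 * t * (cmod b)^2" for t :: real
  proof -
    define \<mu> where "\<mu> = - (complex_of_real t * cnj b)"
    have nb: "b * cnj b = complex_of_real ((cmod b)^2)"
      using complex_norm_square[of b] by simp
    have "0 \<le> Re (quad_form n \<rho> (\<lambda>k. x k + \<mu> * y k))" by (rule dm_psd[OF dm])
    also have "\<dots> = Re (quad_form n \<rho> x) + Re (quad_form n \<rho> (\<lambda>k. \<mu> * y k)) + 2 * Re (Bf n \<rho> x (\<lambda>k. \<mu> * y k))"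
      by (rule Re_quad_add[OF dm_herm[OF dm]])
    also have "quad_form n \<rho> (\<lambda>k. \<mu> * y k) = cnj \<mu> * \<mu> * quad_form n \<rho> y"
      using Bf_scale[of n \<rho> \<mu> y \<mu> y] by (simp add: quad_Bf)
    also have "Bf n \<rho> x (\<lambda>k. \<mu> * y k) = \<mu> * b"
      using Bf_scale[of n \<rho> 1 x \<mu> y] by (simp add: b_def)
    also have "cnj \<mu> * \<mu> = complex_of_real (t^2 * (cmod b)^2)"
      using nb by (simp add: \<mu>_def algebra_simps power2_eq_square)
    also have "\<mu> * b = complex_of_real (- t * (cmod b)^2)"
      using nb by (simp add: \<mu>_def mult.commute mult.left_commute)
    finally show ?thesis by (simp add: algebra_simps)
  qed
  then show ?thesis unfolding b_def[symmetric]
    by (intro real_quad_lemma) (auto intro: dm_psd[OF dm])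
qed

lemma Bf_delta_left:
  assumes "i < 2^n"
  shows "Bf n \<rho> (\<lambda>k. if k = i then 1 else 0) y = (\<Sum>b<2^n. \<rho> i b * y b)"
proof -
  have "Bf n \<rho> (\<lambda>k. if k = i then 1 else 0) y = (\<Sum>a<2^n. if a = i then (\<Sum>b<2^n. \<rho> a b * y b) else 0)"
    unfolding Bf_def by (rule sum.cong) auto
  then show ?thesis using assms by simp
qed

lemma Bf_delta_right:
  assumes "j < 2^n"
  shows "Bf n \<rho> x (\<lambda>k. if k = j then 1 else 0) = (\<Sum>a<2^n. cnj (x a) * \<rho> a j)"
proof -
  have "Bf n \<rho> x (\<lambda>k. if k = j then 1 else 0) = (\<Sum>a<2^n. \<Sum>b<2^n. if b = j then cnj (x a) * \<rho> a b else 0)"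
    unfolding Bf_def by (intro sum.cong) auto
  then show ?thesis using assms by simp
qed

lemma Bf_delta:
  assumes "i < 2^n" "j < 2^n"
  shows "Bf n \<rho> (\<lambda>k. if k = i then 1 else 0) (\<lambda>k. if k = j then 1 else 0) = \<rho> i j"
proof -
  have "(\<Sum>b<2^n. \<rho> i b * (if b = j then 1 else 0)) = (\<Sum>b<2^n. if b = j then \<rho> i b else 0)"
    by (rule sum.cong) auto
  then show ?thesis using assms by (simp add: Bf_delta_left)
qed

lemma diag_nonneg: assumes "density_matrix n \<rho>" "i < 2^n" shows "Re (\<rho> i i) \<ge> 0"
  using dm_psd[OF assms(1), of "\<lambda>k. if k = i then 1 else 0"] Bf_delta[OF assms(2) assms(2), of \<rho>]
  by (simp add: quad_Bf)

lemma offdiag_bound: assumes dm: "density_matrix n \<rho>" and "i < 2^n" "j < 2^n"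
  shows "cmod (\<rho> i j) \<le> sqrt (Re (\<rho> i i)) * sqrt (Re (\<rho> j j))"
proof -
  have "(cmod (\<rho> i j))^2 \<le> Re (\<rho> i i) * Re (\<rho> j j)"
    using Bf_CS[OF dm, of "\<lambda>k. if k = i then 1 else 0" "\<lambda>k. if k = j then 1 else 0"]
      Bf_delta[OF assms(2) assms(3)] Bf_delta[OF assms(2) assms(2)] Bf_delta[OF assms(3) assms(3)]
    by (simp add: quad_Bf)
  then have "cmod (\<rho> i j) \<le> sqrt (Re (\<rho> i i) * Re (\<rho> j j))" by (rule real_le_rsqrt)
  then show ?thesis by (simp add: real_sqrt_mult)
qed

lemma trace_re: assumes "density_matrix n \<rho>" shows "(\<Sum>i<2^n. Re (\<rho> i i)) = 1"
proof -
  have "(\<Sum>i<2^n. \<rho> i i) = 1" using assms by (simp add: density_matrix_def)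
  then have "Re (\<Sum>i<2^n. \<rho> i i) = 1" by simp
  then show ?thesis by (simp add: Re_sum)
qed

lemma quad_upper:
  assumes dm: "density_matrix n \<rho>"
  shows "Re (quad_form n \<rho> x) \<le> (\<Sum>i<2^n. (cmod (x i))^2)"
proof -
  define d where "d i = sqrt (Re (\<rho> i i))" for i
  have eqa: "(\<Sum>i<2^n. cmod (x i) * d i) = (\<Sum>i<2^n. \<bar>cmod (x i)\<bar> * \<bar>d i\<bar>)"
  proof (rule sum.cong)
    fix i assume "i \<in> {..<(2::nat)^n}"
    then have "d i \<ge> 0" using diag_nonneg[OF dm, of i] by (simp add: d_def)
    then show "cmod (x i) * d i = \<bar>cmod (x i)\<bar> * \<bar>d i\<bar>" by simp
  qed simp
  have "Re (quad_form n \<rho> x) \<le> cmod (quad_form n \<rho> x)" by (rule complex_Re_le_cmod)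
  also have "\<dots> \<le> (\<Sum>i<2^n. cmod (\<Sum>j<2^n. cnj (x i) * \<rho> i j * x j))"
    unfolding quad_form_def by (rule norm_sum)
  also have "\<dots> \<le> (\<Sum>i<2^n. \<Sum>j<2^n. cmod (cnj (x i) * \<rho> i j * x j))"
    by (intro sum_mono norm_sum)
  also have "\<dots> \<le> (\<Sum>i<2^n. \<Sum>j<2^n. (cmod (x i) * d i) * (cmod (x j) * d j))"
  proof (intro sum_mono)
    fix i j assume "i \<in> {..<(2::nat)^n}" "j \<in> {..<(2::nat)^n}"
    then have "cmod (\<rho> i j) \<le> d i * d j" using offdiag_bound[OF dm] by (simp add: d_def)
    then have "cmod (x i) * cmod (\<rho> i j) * cmod (x j) \<le> cmod (x i) * (d i * d j) * cmod (x j)"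
      by (intro mult_right_mono mult_left_mono) auto
    then show "cmod (cnj (x i) * \<rho> i j * x j) \<le> (cmod (x i) * d i) * (cmod (x j) * d j)"
      by (simp add: norm_mult algebra_simps)
  qed
  also have "\<dots> = (\<Sum>i<2^n. cmod (x i) * d i)^2"
    by (simp add: power2_eq_square sum_product)
  also have "\<dots> = (\<Sum>i<2^n. \<bar>cmod (x i)\<bar> * \<bar>d i\<bar>)^2" using eqa by simp
  also have "\<dots> \<le> (L2_set (\<lambda>i. cmod (x i)) {..<2^n} * L2_set d {..<2^n})^2"
    by (intro power_mono L2_set_mult_ineq) (auto intro: sum_nonneg)
  also have "\<dots> = (\<Sum>i<2^n. (cmod (x i))^2) * (\<Sum>i<2^n. (d i)^2)"
    by (simp add: L2_set_def power_mult_distrib sum_nonneg)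
  also have "(\<Sum>i<2^n. (d i)^2) = (\<Sum>i<2^n. Re (\<rho> i i))"
    by (rule sum.cong) (auto simp: d_def diag_nonneg[OF dm])
  finally show ?thesis using trace_re[OF dm] by simp
qed

definition vv :: "nat \<Rightarrow> (nat \<Rightarrow> complex) \<Rightarrow> nat \<Rightarrow> complex" where
  "vv n w x = (\<Prod>i<n. if bit x i then w i else 1)"

lemma vv_0: "vv n w 0 = 1" by (simp add: vv_def)

lemma vv_pow: assumes "k < n" shows "vv n w (2^k) = w k"
proof -
  have "vv n w (2^k) = (\<Prod>i<n. if k = i then w i else 1)"
    unfolding vv_def by (rule prod.cong) (auto simp: bit_exp_iff)
  then show ?thesis using assms by simp
qed

lemma vv_norm: "(\<Sum>x<2^n. (cmod (vv n w x))^2) = (\<Prod>i<n. 1 + (cmod (w i))^2)"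
proof -
  have "(\<Sum>x<2^n. (cmod (vv n w x))^2) = (\<Sum>x::nat<2^n. \<Prod>i<n. (\<lambda>i b. if b then (cmod (w i))^2 else 1) i (bit x i))"
    by (rule sum.cong) (auto simp: vv_def prod_norm[symmetric] prod_power_distrib intro!: prod.cong)
  also have "\<dots> = (\<Prod>i<n. 1 + (cmod (w i))^2)" by (subst sum_bits_prod) simp
  finally show ?thesis .
qed

lemma pi_vv: "pi_state n w x = complex_of_real (1 / (\<Prod>i<n. sqrt (1 + (cmod (w i))^2))) * vv n w x"
  by (simp add: pi_state_def vv_def prod_dividef of_real_prod)

lemma quad_scale_real: "quad_form n \<rho> (\<lambda>x. complex_of_real c * v x) = complex_of_real (c^2) * quad_form n \<rho> v"
  using Bf_scale[of n \<rho> "complex_of_real c" v "complex_of_real c" v] by (simp add: quad_Bf power2_eq_square)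

lemma ind_sum_pow: assumes "k < n"
  shows "(\<Sum>i<n. if (2::nat)^k = 2^i then c i else 0) = (c k :: 'a::comm_monoid_add)"
proof -
  have "(\<Sum>i<n. if (2::nat)^k = 2^i then c i else 0) = (\<Sum>i<n. if k = i then c i else 0)"
    by (rule sum.cong) auto
  then show ?thesis using assms by simp
qed

lemma ind_sum_none: assumes "\<forall>k<n. x \<noteq> 2^k"
  shows "(\<Sum>i<n. if (x::nat) = 2^i then c i else 0) = (0 :: 'a::comm_monoid_add)"
  using assms by (intro sum.neutral) auto

lemma ind_sum_swap:
  "(\<Sum>x<2^n. \<Sum>i<n. if (x::nat) = 2^i then F x i else 0) = (\<Sum>i<n. F (2^i) i :: 'a::comm_monoid_add)"
proof -
  have "(\<Sum>x<2^n. \<Sum>i<n. if (x::nat) = 2^i then F x i else 0) = (\<Sum>i<n. \<Sum>x<2^n. if (x::nat) = 2^i then F x i else 0)"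
    by (rule sum.swap)
  also have "\<dots> = (\<Sum>i<n. F (2^i) i)"
  proof (rule sum.cong)
    fix i assume "i \<in> {..<n}"
    then have "(2::nat)^i < 2^n" by simp
    then show "(\<Sum>x<2^n. if (x::nat) = 2^i then F x i else 0) = F (2^i) i"
      by (simp add: sum.delta)
  qed simp
  finally show ?thesis .
qed

lemma ind_sum_sq:
  "(cmod (\<Sum>i<n. if (x::nat) = 2^i then c i else 0))^2 = (\<Sum>i<n. if x = 2^i then (cmod (c i))^2 else 0)"
proof (cases "\<exists>k<n. x = 2^k")
  case True
  then obtain k where "k < n" "x = 2^k" by blast
  then show ?thesis by (simp add: ind_sum_pow)
next
  case False
  then show ?thesis by (simp add: ind_sum_none)
qed

lemma prod_lower: fixes n :: nat and x :: "nat \<Rightarrow> real" shows "(\<forall>i<n. x i \<ge> (0::real)) \<Longrightarrow> 1 + (\<Sum>i<n. x i) \<le> (\<Prod>i<n. 1 + x i)"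
proof (induction n)
  case 0 then show ?case by simp
next
  case (Suc n)
  define S where "S = (\<Sum>i<n. x i)"
  define P where "P = (\<Prod>i<n. 1 + x i)"
  have S0: "S \<ge> 0" using Suc.prems by (auto simp: S_def intro: sum_nonneg)
  have IH: "1 + S \<le> P" using Suc by (simp add: S_def P_def)
  have xn: "x n \<ge> 0" using Suc.prems by simp
  have "(1 + S) * (1 + x n) \<le> P * (1 + x n)" using IH xn by (intro mult_right_mono) auto
  moreover have "S * x n \<ge> 0" using S0 xn by simp
  ultimately have "1 + (S + x n) \<le> P * (1 + x n)" by (simp add: algebra_simps)
  then show ?case by (simp add: S_def P_def)
qed

lemma prod_upper: fixes n :: nat and x :: "nat \<Rightarrow> real" shows "(\<forall>i<n. x i \<ge> (0::real)) \<Longrightarrow> (\<Sum>i<n. x i) \<le> 1 \<Longrightarrow>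
   (\<Prod>i<n. 1 + x i) \<le> 1 + (\<Sum>i<n. x i) + (\<Sum>i<n. x i)^2"
proof (induction n)
  case 0 then show ?case by simp
next
  case (Suc n)
  define S where "S = (\<Sum>i<n. x i)"
  define P where "P = (\<Prod>i<n. 1 + x i)"
  have xn: "x n \<ge> 0" using Suc.prems by simp
  have S0: "S \<ge> 0" using Suc.prems by (auto simp: S_def intro: sum_nonneg)
  have "S + x n \<le> 1" using Suc.prems(2) by (simp add: S_def)
  then have S1: "S \<le> 1" using xn by linarith
  have IH: "P \<le> 1 + S + S^2" using Suc S1 by (simp add: S_def P_def)
  have "P * (1 + x n) \<le> (1 + S + S^2) * (1 + x n)" using IH xn by (intro mult_right_mono) auto
  moreover have "S * S \<le> S" using S0 S1 by (simp add: mult_le_one mult_left_le)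
  then have "S * S * x n \<le> S * x n" using xn by (rule mult_right_mono)
  then have f1: "S * (S * x n) \<le> S * x n" by (simp add: mult.assoc)
  have f2: "0 \<le> x n * x n" by simp
  have e1: "(1 + S + S^2) * (1 + x n) = 1 + S + x n + S*S + S * x n + S * (S * x n)"
    by (simp add: algebra_simps power2_eq_square)
  have e2: "1 + (S + x n) + (S + x n)^2 = 1 + S + x n + S*S + x n * x n + 2 * (S * x n)"
    by (simp add: algebra_simps power2_eq_square)
  ultimately have "P * (1 + x n) \<le> 1 + (S + x n) + (S + x n)^2"
    using f1 f2 e1 e2 by linarith
  then show ?case by (simp add: S_def P_def)
qed

lemma psd_split:
  assumes dm: "density_matrix n \<rho>" and t: "t \<ge> 0"
  shows "t * Re (quad_form n \<rho> (\<lambda>k. u k + r k)) \<ge> t * (1 - t) * Re (quad_form n \<rho> u) - (1 - t) * Re (quad_form n \<rho> r)"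
proof -
  have h: "hermitian_op n \<rho>" using dm by (rule dm_herm)
  have "0 \<le> Re (quad_form n \<rho> (\<lambda>k. complex_of_real t * u k + r k))" by (rule dm_psd[OF dm])
  also have "\<dots> = t^2 * Re (quad_form n \<rho> u) + Re (quad_form n \<rho> r) + 2 * t * Re (Bf n \<rho> u r)"
  proof -
    have "Bf n \<rho> (\<lambda>k. complex_of_real t * u k) r = complex_of_real t * Bf n \<rho> u r"
      using Bf_scale[of n \<rho> "complex_of_real t" u 1 r] by simp
    then show ?thesis using Re_quad_add[OF h, of "\<lambda>k. complex_of_real t * u k" r] quad_scale_real[of n \<rho> t u]
      by simp
  qed
  finally have A: "0 \<le> t^2 * Re (quad_form n \<rho> u) + Re (quad_form n \<rho> r) + 2 * t * Re (Bf n \<rho> u r)" .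
  have B: "Re (quad_form n \<rho> (\<lambda>k. u k + r k)) = Re (quad_form n \<rho> u) + Re (quad_form n \<rho> r) + 2 * Re (Bf n \<rho> u r)"
    by (rule Re_quad_add[OF h])
  show ?thesis using A unfolding B by (simp add: algebra_simps power2_eq_square)
qed

theorem theorem4p9:
  fixes n :: nat and \<rho> :: "nat \<Rightarrow> nat \<Rightarrow> complex" and a z :: "nat \<Rightarrow> complex"
  assumes "density_matrix n \<rho>"
    and "\<forall>i<n. z i = \<rho> (e_idx i) 0"
    and "vnorm n (\<lambda>i. a i - z i) \<le> vnorm n a / 2"
  shows "Re (quad_form n \<rho> (pi_state n (\<lambda>i. a i / 10)))
           \<ge> Re (\<rho> 0 0) + (vnorm n a)\<^sup>2 / 20"
proof -
  have dm: "density_matrix n \<rho>" by fact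
  have herm: "hermitian_op n \<rho>" using dm by (rule dm_herm)
  have pos0: "(0::nat) < 2^n" by simp
  define w where "w i = a i / 10" for i
  have wdef: "(\<lambda>i. a i / 10) = w" by (simp add: w_def fun_eq_iff)
  define s where "s = (\<Sum>i<n. (cmod (w i))^2)"
  define A2 where "A2 = (\<Sum>i<n. (cmod (a i))^2)"
  define N where "N = (\<Prod>i<n. 1 + (cmod (w i))^2)"
  define p where "p = Re (\<rho> 0 0)"
  define d0 :: "nat \<Rightarrow> complex" where "d0 = (\<lambda>k. if k = 0 then 1 else 0)"
  define y where "y x = (\<Sum>i<n. if x = 2^i then w i else 0)" for x :: nat
  define u where "u x = d0 x + y x" for x
  define r where "r x = vv n w x - u x" for x
  define Z where "Z = (\<Sum>i<n. (cmod (z i))^2)"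
  define yz where "yz x = (\<Sum>i<n. if x = 2^i then z i else 0)" for x :: nat
  have s0: "s \<ge> 0" by (simp add: s_def sum_nonneg)
  have A20: "A2 \<ge> 0" by (simp add: A2_def sum_nonneg)
  have Z0: "Z \<ge> 0" by (simp add: Z_def sum_nonneg)
  have sA: "s = A2 / 100"
    by (simp add: s_def A2_def w_def norm_divide power_divide sum_divide_distrib)
  have vnA: "(vnorm n a)^2 = A2" by (simp add: vnorm_def A2_def sum_nonneg)
  have zrho: "\<rho> (2^i) 0 = z i" if "i < n" for i
    using assms(2) that by (simp add: e_idx_def)
  have rhoz: "\<rho> 0 (2^i) = cnj (z i)" if "i < n" for i
  proof -
    have "(2::nat)^i < 2^n" using that by simp
    then have "\<rho> 0 (2^i) = cnj (\<rho> (2^i) 0)" using herm pos0 unfolding hermitian_op_def by blast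
    then show ?thesis using zrho[OF that] by simp
  qed
  have Q0: "Re (quad_form n \<rho> d0) = p"
    using Bf_delta[OF pos0 pos0, of \<rho>] by (simp add: quad_Bf d0_def p_def)
  have d0n: "(\<Sum>x::nat<2^n. (cmod (d0 x))^2) = 1"
  proof -
    have "(\<Sum>x<(2::nat)^n. (cmod (d0 x))^2) = (\<Sum>x<(2::nat)^n. if x = 0 then 1 else 0)"
      by (rule sum.cong) (auto simp: d0_def)
    then show ?thesis using pos0 by simp
  qed
  have p1: "p \<le> 1" using quad_upper[OF dm, of d0] Q0 d0n by simp
  have p0: "p \<ge> 0" using diag_nonneg[OF dm pos0] by (simp add: p_def)
  have BZ: "Bf n \<rho> yz d0 = complex_of_real Z"
  proof -
    have "Bf n \<rho> yz d0 = (\<Sum>x::nat<2^n. cnj (yz x) * \<rho> x 0)"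
      unfolding d0_def by (rule Bf_delta_right[OF pos0])
    also have "\<dots> = (\<Sum>x::nat<2^n. \<Sum>i<n. if x = 2^i then cnj (z i) * \<rho> x 0 else 0)"
      unfolding yz_def cnj_sum sum_distrib_right by (intro sum.cong refl) auto
    also have "\<dots> = (\<Sum>i<n. cnj (z i) * \<rho> (2^i) 0)" by (rule ind_sum_swap)
    also have "\<dots> = (\<Sum>i<n. complex_of_real ((cmod (z i))^2))"
      by (rule sum.cong) (auto simp: zrho complex_norm_square[symmetric] mult.commute)
    finally show ?thesis by (simp add: Z_def)
  qed
  have QY: "Re (quad_form n \<rho> yz) \<le> Z"
  proof -
    have "Re (quad_form n \<rho> yz) \<le> (\<Sum>x::nat<2^n. (cmod (yz x))^2)" by (rule quad_upper[OF dm])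
    also have "\<dots> = (\<Sum>x::nat<2^n. \<Sum>i<n. if x = 2^i then (cmod (z i))^2 else 0)"
      by (simp add: yz_def ind_sum_sq)
    also have "\<dots> = Z" unfolding Z_def by (rule ind_sum_swap)
    finally show ?thesis .
  qed
  have Z1: "Z \<le> 1"
  proof -
    have "(cmod (Bf n \<rho> yz d0))^2 \<le> Re (quad_form n \<rho> yz) * Re (quad_form n \<rho> d0)"
      by (rule Bf_CS[OF dm])
    also have "\<dots> \<le> Z * 1"
      using QY Q0 p1 p0 dm_psd[OF dm, of yz] by (intro mult_mono) auto
    finally have "Z^2 \<le> Z" using BZ Z0 by simp
    then have "Z * Z \<le> Z * 1" by (simp add: power2_eq_square)
    then show ?thesis using Z0 by (cases "Z = 0") (auto simp: mult_le_cancel_left_pos)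
  qed
  define La where "La = L2_set (\<lambda>i. cmod (a i)) {..<n}"
  define Ld where "Ld = L2_set (\<lambda>i. cmod (a i - z i)) {..<n}"
  define Lz where "Lz = L2_set (\<lambda>i. cmod (z i)) {..<n}"
  have vn: "vnorm n v = L2_set (\<lambda>i. cmod (v i)) {..<n}" for v by (simp add: vnorm_def L2_set_def)
  have Ld2: "Ld \<le> La / 2" using assms(3) by (simp add: vn La_def Ld_def)
  have "La \<le> L2_set (\<lambda>i. cmod (a i - z i) + cmod (z i)) {..<n}"
    unfolding La_def by (rule L2_set_mono) (auto simp: norm_triangle_sub[of "a _" "z _"] add.commute)
  also have "\<dots> \<le> Ld + Lz" unfolding Ld_def Lz_def by (rule L2_set_triangle_ineq)
  finally have "La \<le> Ld + Lz" .
  then have La2: "La \<le> 2 * Lz" using Ld2 by linarith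
  have "Lz \<le> 1" using Z1 by (simp add: Lz_def L2_set_def Z_def)
  have La0: "La \<ge> 0" by (simp add: La_def)
  have LaA: "La^2 = A2" by (simp add: La_def L2_set_def A2_def sum_nonneg)
  have "A2 \<le> 4" using La2 \<open>Lz \<le> 1\<close> La0 LaA
  proof -
    have "La \<le> 2" using La2 \<open>Lz \<le> 1\<close> by linarith
    then have "La^2 \<le> 2^2" using La0 by (rule power_mono)
    then show ?thesis using LaA by simp
  qed
  then have s1: "s \<le> 1/25" using sA by simp
  have inner: "Re (\<Sum>i<n. cnj (z i) * a i) \<ge> A2 / 2"
  proof -
    have t: "Re (cnj (z i) * a i) \<ge> (cmod (a i))^2 - cmod (a i - z i) * cmod (a i)" for i
    proof -
      have "cnj (z i) * a i = cnj (a i) * a i - cnj (a i - z i) * a i" by (simp add: algebra_simps)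
      moreover have "Re (cnj (a i) * a i) = (cmod (a i))^2"
        using complex_norm_square[of "a i"] by (metis Re_complex_of_real mult.commute)
      moreover have "Re (cnj (a i - z i) * a i) \<le> cmod (a i - z i) * cmod (a i)"
      proof -
        have "cmod (cnj (a i - z i) * a i) = cmod (a i - z i) * cmod (a i)"
          by (simp only: norm_mult complex_mod_cnj)
        then show ?thesis using complex_Re_le_cmod[of "cnj (a i - z i) * a i"] by linarith
      qed
      ultimately show ?thesis by simp
    qed
    have "(\<Sum>i<n. cmod (a i - z i) * cmod (a i)) \<le> Ld * La"
      using L2_set_mult_ineq[of "\<lambda>i. cmod (a i - z i)" "\<lambda>i. cmod (a i)" "{..<n}"]
      by (simp add: Ld_def La_def)
    also have "\<dots> \<le> La / 2 * La" using Ld2 La0 by (intro mult_right_mono) auto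
    finally have "(\<Sum>i<n. cmod (a i - z i) * cmod (a i)) \<le> A2 / 2" using LaA by (simp add: power2_eq_square)
    moreover have "(\<Sum>i<n. Re (cnj (z i) * a i)) \<ge> (\<Sum>i<n. (cmod (a i))^2 - cmod (a i - z i) * cmod (a i))"
      by (intro sum_mono t)
    ultimately show ?thesis by (simp add: sum_subtractf A2_def)
  qed
  have By: "Bf n \<rho> d0 y = (\<Sum>i<n. cnj (z i) * a i) / 10"
  proof -
    have "Bf n \<rho> d0 y = (\<Sum>x::nat<2^n. \<rho> 0 x * y x)"
      unfolding d0_def by (rule Bf_delta_left[OF pos0])
    also have "\<dots> = (\<Sum>x::nat<2^n. \<Sum>i<n. if x = 2^i then \<rho> 0 x * w i else 0)"
      unfolding y_def sum_distrib_left by (intro sum.cong refl) auto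
    also have "\<dots> = (\<Sum>i<n. \<rho> 0 (2^i) * w i)" by (rule ind_sum_swap)
    also have "\<dots> = (\<Sum>i<n. cnj (z i) * a i / 10)"
      by (rule sum.cong) (auto simp: rhoz w_def)
    finally show ?thesis by (simp add: sum_divide_distrib)
  qed
  have q: "Re (quad_form n \<rho> u) \<ge> p + 10 * s"
  proof -
    have "Re (quad_form n \<rho> u) = p + Re (quad_form n \<rho> y) + 2 * Re (Bf n \<rho> d0 y)"
      using Re_quad_add[OF herm, of d0 y] Q0 by (simp add: u_def[abs_def])
    moreover have "Re (quad_form n \<rho> y) \<ge> 0" by (rule dm_psd[OF dm])
    moreover have "Re (Bf n \<rho> d0 y) = Re (\<Sum>i<n. cnj (z i) * a i) / 10"
      unfolding By by (simp only: Re_divide_numeral)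
    then have "Re (Bf n \<rho> d0 y) \<ge> A2 / 20" using inner by linarith
    ultimately show ?thesis using sA by simp
  qed
  have rpt: "(cmod (vv n w x))^2 = (cmod (r x))^2 + (cmod (d0 x))^2 + (\<Sum>i<n. if x = 2^i then (cmod (w i))^2 else 0)" for x
  proof (cases "x = 0")
    case True
    have "y 0 = 0" unfolding y_def by (rule ind_sum_none) simp
    then show ?thesis using True by (simp add: r_def u_def d0_def vv_0 ind_sum_none)
  next
    case False
    show ?thesis
    proof (cases "\<exists>k<n. x = 2^k")
      case True
      then obtain k where k: "k < n" "x = 2^k" by blast
      have "y x = w k" using k by (simp add: y_def ind_sum_pow)
      then show ?thesis using k by (simp add: r_def u_def d0_def vv_pow ind_sum_pow)
    next
      case nk: False
      have "y x = 0" using nk unfolding y_def by (intro ind_sum_none) auto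
      then show ?thesis using nk False by (simp add: r_def u_def d0_def ind_sum_none)
    qed
  qed
  have rn: "(\<Sum>x::nat<2^n. (cmod (r x))^2) = N - 1 - s"
  proof -
    have "N = (\<Sum>x::nat<2^n. (cmod (vv n w x))^2)" by (simp add: N_def vv_norm)
    also have "\<dots> = (\<Sum>x::nat<2^n. (cmod (r x))^2) + (\<Sum>x::nat<2^n. (cmod (d0 x))^2)
                 + (\<Sum>x::nat<2^n. \<Sum>i<n. if x = 2^i then (cmod (w i))^2 else 0)"
      by (simp add: rpt sum.distrib)
    also have "(\<Sum>x::nat<2^n. \<Sum>i<n. if x = 2^i then (cmod (w i))^2 else 0) = s"
      unfolding s_def by (rule ind_sum_swap)
    finally show ?thesis using d0n by simp
  qed
  have Nl: "1 + s \<le> N" unfolding N_def s_def by (rule prod_lower) simp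
  have Nu: "N \<le> 1 + s + s^2" unfolding N_def s_def
    by (rule prod_upper) (use s1 in \<open>auto simp: s_def\<close>)
  have Qr: "Re (quad_form n \<rho> r) \<le> s^2" using quad_upper[OF dm, of r] rn Nu by simp
  have Qr0: "Re (quad_form n \<rho> r) \<ge> 0" by (rule dm_psd[OF dm])
  have vsplit: "vv n w = (\<lambda>k. u k + r k)" by (simp add: r_def fun_eq_iff)
  define V where "V = Re (quad_form n \<rho> (vv n w))"
  define qq where "qq = Re (quad_form n \<rho> u)"
  have Vb: "V \<ge> (1 - s) * (p + 9 * s)"
  proof (cases "s = 0")
    case True
    then have Qr00: "Re (quad_form n \<rho> r) = 0" using Qr Qr0 by simp
    have "(cmod (Bf n \<rho> u r))^2 \<le> qq * Re (quad_form n \<rho> r)" unfolding qq_def by (rule Bf_CS[OF dm])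
    then have "Bf n \<rho> u r = 0" using Qr00 by simp
    then have "V = qq" using Re_quad_add[OF herm, of u r] Qr00 by (simp add: V_def qq_def vsplit)
    then show ?thesis using q True by (simp add: qq_def)
  next
    case False
    then have sp: "s > 0" using s0 by simp
    have "s * V \<ge> s * (1 - s) * qq - (1 - s) * Re (quad_form n \<rho> r)"
      unfolding V_def qq_def vsplit by (rule psd_split[OF dm s0])
    moreover have "s * (1 - s) * qq \<ge> s * (1 - s) * (p + 10 * s)"
      using q s1 s0 by (intro mult_left_mono) (auto simp: qq_def)
    moreover have "(1 - s) * Re (quad_form n \<rho> r) \<le> (1 - s) * s^2"
      using Qr s1 by (intro mult_left_mono) auto
    ultimately have "s * V \<ge> s * ((1 - s) * (p + 9 * s))"
      by (simp add: algebra_simps power2_eq_square)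
    then show ?thesis using sp by simp
  qed
  define c where "c = (\<Prod>i<n. sqrt (1 + (cmod (w i))^2))"
  have c2: "c^2 = N" unfolding c_def N_def prod_power_distrib
    by (rule prod.cong) (simp_all add: add_nonneg_nonneg)
  have Npos: "N > 0" using Nl s0 by simp
  have piv: "pi_state n w = (\<lambda>x. complex_of_real (1 / c) * vv n w x)"
    by (simp add: fun_eq_iff pi_vv c_def)
  have lhs: "Re (quad_form n \<rho> (pi_state n w)) = V / N"
    unfolding piv quad_scale_real using c2 by (simp add: V_def power_divide)
  have poly: "(1 - s) * (p + 9 * s) \<ge> (p + 5 * s) * (1 + s + s^2)"
  proof -
    have lin: "0 \<le> D" if "0 \<le> (s::real)" "X \<le> 2 * s + Y" "25 * Y \<le> s" "25 * W \<le> Y"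
      "D = 4 * s - 14 * Y - 5 * W - X" for X Y W D :: real using that by linarith
    have f1: "p * (2 * s + s * s) \<le> 2 * s + s * s" using p1 s0 mult_right_mono[of p 1 "2 * s + s * s"] by simp
    have f2: "25 * (s * s) \<le> s" using s1 s0 mult_left_mono[of s "1/25" s] by simp
    have f3: "25 * (s * s * s) \<le> s * s" using s1 s0 mult_left_mono[of s "1/25" "s * s"] by (simp add: mult.commute mult.left_commute)
    have e: "(1 - s) * (p + 9 * s) - (p + 5 * s) * (1 + s + s^2) = 4 * s - 14 * (s * s) - 5 * (s * s * s) - p * (2 * s + s * s)"
      by (simp add: algebra_simps power2_eq_square)
    have "0 \<le> (1 - s) * (p + 9 * s) - (p + 5 * s) * (1 + s + s^2)"
      by (rule lin[OF s0 f1 f2 f3 e])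
    then show ?thesis by simp
  qed
  have "(p + 5 * s) * N \<le> (p + 5 * s) * (1 + s + s^2)" using Nu p0 s0 by (intro mult_left_mono) auto
  then have "(p + 5 * s) * N \<le> V" using poly Vb by linarith
  then have "p + 5 * s \<le> V / N" using Npos by (simp add: pos_le_divide_eq)
  then show ?thesis unfolding wdef lhs using vnA sA by (simp add: p_def)
qed

end
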